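(* Let $X$ be a commutative free algebra over $\mathbb{K}$ with a set of free generators $A$, and let $S\subset A$. Let $R\subset\langle S\rangle$ be a set of free generators and let $x\in X\setminus\langle S\rangle$. Then $R\cup\{x\}$ is a set of free generators.
   Context: Algebras are associative linear algebras over $\mathbb{K}$ ($\mathbb{R}$ or $\mathbb{C}$). For a subset $S$ of an algebra, $\langle S\rangle$ is the subalgebra generated by $S$; in the commutative case $\langle S\rangle=\{P(x_1,\dots,x_n): n\in\mathbb{N}, P\in\mathbb{P}_n, x_1,\dots,x_n\in S\}$, where $\mathbb{P}_n$ is the set of polynomials in $n$ variables over $\mathbb{K}$ with no constant term. In a commutative algebra, a subset $S$ is a set of free generators (SFG) if for all $n\in\mathbb{N}$, every non-zero $P\in\mathbb{P}_n$ and all pairwise distinct $x_1,\dots,x_n\in S$ we have $P(x_1,\dots,x_n)\neq0$ (equivalently, the monomials $x_1^{k_1}\cdots x_n^{k_n}$ in distinct elements of $S$ with $k_i\ge1$ form a basis of $\langle S\rangle$). $X$ is a commutative free algebra with SFG $A$ if $A$ is an SFG and $X=\langle A\rangle$. *)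

theory Defs
  imports Complex_Main "HOL-Library.Multiset"
begin

text \<open>A commutative (not necessarily unital) algebra over a field 'k: the carrier is
  the whole type 'a (a commutative ring), with scalar multiplication sc making it a
  'k-module such that multiplication is bilinear.\<close>
definition comm_algebra :: "('k::field \<Rightarrow> 'a::comm_ring \<Rightarrow> 'a) \<Rightarrow> bool" where
  "comm_algebra sc \<longleftrightarrow> module sc \<and> (\<forall>c u v. sc c (u * v) = sc c u * v)"

fun nprod :: "'a::times list \<Rightarrow> 'a" where
  "nprod [] = undefined"
| "nprod [a] = a"
| "nprod (a # b # xs) = a * nprod (b # xs)"

text \<open>A monomial in the variables indexed by nat is a multiset of indices (the
  exponent of variable i is its multiplicity); its value at x.\<close>
definition monom :: "(nat \<Rightarrow> 'a::comm_ring) \<Rightarrow> nat multiset \<Rightarrow> 'a" where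
  "monom x M = nprod (map x (sorted_list_of_multiset M))"

definition nc_poly :: "nat \<Rightarrow> (nat multiset \<Rightarrow> 'k::zero) \<Rightarrow> bool" where
  "nc_poly n P \<longleftrightarrow> finite {M. P M \<noteq> 0} \<and>
     (\<forall>M. P M \<noteq> 0 \<longrightarrow> M \<noteq> {#} \<and> set_mset M \<subseteq> {..<n})"

definition peval :: "('k::field \<Rightarrow> 'a::comm_ring \<Rightarrow> 'a) \<Rightarrow> (nat multiset \<Rightarrow> 'k)
    \<Rightarrow> (nat \<Rightarrow> 'a) \<Rightarrow> 'a" where
  "peval sc P x = (\<Sum>M\<in>{M. P M \<noteq> 0}. sc (P M) (monom x M))"

definition gen :: "('k::field \<Rightarrow> 'a::comm_ring \<Rightarrow> 'a) \<Rightarrow> 'a set \<Rightarrow> 'a set" where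
  "gen sc S = {peval sc P x | n P x. nc_poly n P \<and> x ` {..<n} \<subseteq> S}"

definition SFG :: "('k::field \<Rightarrow> 'a::comm_ring \<Rightarrow> 'a) \<Rightarrow> 'a set \<Rightarrow> bool" where
  "SFG sc S \<longleftrightarrow> (\<forall>n P x. nc_poly n P \<and> (\<exists>M. P M \<noteq> 0) \<and> inj_on x {..<n}
       \<and> x ` {..<n} \<subseteq> S \<longrightarrow> peval sc P x \<noteq> 0)"

end

theory Submission
  imports Defs "HOL-Library.Poly_Mapping" "HOL-Library.Multiset_Order" "HOL-Computational_Algebra.Polynomial"
begin

section \<open>Products in a commutative semigroup\<close>

lemma nprod_Cons: "xs \<noteq> [] \<Longrightarrow> nprod (a # xs) = a * nprod xs"
  by (cases xs) auto

lemma nprod_append: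
  fixes xs ys :: "'a::semigroup_mult list"
  shows "xs \<noteq> [] \<Longrightarrow> ys \<noteq> [] \<Longrightarrow> nprod (xs @ ys) = nprod xs * nprod ys"
proof (induction xs)
  case Nil then show ?case by simp
next
  case (Cons a xs)
  show ?case
  proof (cases "xs = []")
    case True then show ?thesis using Cons by (simp add: nprod_Cons)
  next
    case False then show ?thesis using Cons by (simp add: nprod_Cons mult.assoc)
  qed
qed

lemma nprod_rotate:
  fixes ys1 ys2 :: "'a::ab_semigroup_mult list"
  assumes "ys1 @ ys2 \<noteq> []"
  shows "nprod (ys1 @ a # ys2) = a * nprod (ys1 @ ys2)"
proof (cases "ys1 = []")
  case True then show ?thesis using assms by (simp add: nprod_Cons)
next
  case F1: False
  show ?thesis
  proof (cases "ys2 = []")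
    case True
    then show ?thesis using F1 by (simp add: nprod_append mult.commute)
  next
    case False
    then show ?thesis using F1
      by (simp add: nprod_append nprod_Cons mult.left_commute)
  qed
qed

lemma nprod_perm:
  fixes xs ys :: "'a::ab_semigroup_mult list"
  shows "mset xs = mset ys \<Longrightarrow> nprod xs = nprod ys"
proof (induction xs arbitrary: ys)
  case Nil then show ?case by simp
next
  case (Cons a xs)
  have "a \<in> set ys" using Cons.prems by (metis list.set_intros(1) set_mset_mset)
  then obtain ys1 ys2 where ys: "ys = ys1 @ a # ys2" by (meson split_list)
  have m: "mset xs = mset (ys1 @ ys2)" using Cons.prems ys by simp
  show ?case
  proof (cases "xs = []")
    case True
    then have "ys1 @ ys2 = []" using m by simp
    then show ?thesis using ys True by simp
  next
    case False
    then have "ys1 @ ys2 \<noteq> []" using m by auto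
    then show ?thesis using ys Cons.IH[OF m] False by (simp add: nprod_Cons nprod_rotate)
  qed
qed

lemma monom_list:
  assumes "mset L = M" "M \<noteq> {#}"
  shows "Defs.monom w M = nprod (map w L)"
  unfolding Defs.monom_def
  by (rule nprod_perm) (simp add: assms)

lemma monom_add:
  assumes "M \<noteq> {#}" "N \<noteq> {#}"
  shows "Defs.monom w (M + N) = Defs.monom w M * Defs.monom w N"
proof -
  obtain L1 L2 where "mset L1 = M" "mset L2 = N" by (metis ex_mset)
  moreover have "L1 \<noteq> []" "L2 \<noteq> []" using assms calculation by auto
  ultimately show ?thesis using assms
    by (simp add: monom_list[of "L1 @ L2"] monom_list[of L1] monom_list[of L2] nprod_append)
qed

lemma monom_single: "Defs.monom w {#k#} = w k"
  by (simp add: monom_list[of "[k]"])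

lemma monom_cong: "(\<And>k. k \<in># M \<Longrightarrow> w k = w' k) \<Longrightarrow> Defs.monom w M = Defs.monom w' M"
  unfolding Defs.monom_def by (metis (mono_tags, lifting) map_eq_conv set_sorted_list_of_multiset)

section \<open>Linear extension over poly mappings\<close>

definition lin :: "('m \<Rightarrow> 'c::zero \<Rightarrow> 'b::comm_monoid_add) \<Rightarrow> ('m \<Rightarrow>\<^sub>0 'c) \<Rightarrow> 'b" where
  "lin f P = (\<Sum>M\<in>Poly_Mapping.keys P. f M (Poly_Mapping.lookup P M))"

lemma lin_add:
  assumes "\<And>M. f M 0 = 0" "\<And>M a b. f M (a + b) = f M a + f M b"
  shows "lin f (P + Q) = lin f P + lin f Q"
  unfolding lin_def by (rule setsum_keys_plus_distrib) (use assms in auto)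

lemma lin_zero [simp]: "lin f 0 = 0"
  by (simp add: lin_def)

lemma lin_single:
  assumes "f M 0 = 0" shows "lin f (Poly_Mapping.single M c) = f M c"
  using assms by (cases "c = 0") (auto simp: lin_def)

lemma lin_sum:
  assumes "\<And>M. f M 0 = 0" "\<And>M a b. f M (a + b) = f M a + f M b"
  shows "lin f (sum g I) = (\<Sum>i\<in>I. lin f (g i))"
  by (induction I rule: infinite_finite_induct) (simp_all add: lin_add[OF assms])

lemma pm_expansion: "P = (\<Sum>M\<in>Poly_Mapping.keys P. Poly_Mapping.single M (Poly_Mapping.lookup P M))"
proof (rule poly_mapping_eqI)
  fix k
  have "Poly_Mapping.lookup (\<Sum>M\<in>Poly_Mapping.keys P. Poly_Mapping.single M (Poly_Mapping.lookup P M)) k = (\<Sum>M\<in>Poly_Mapping.keys P. Poly_Mapping.lookup P M when M = k)"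
    by (simp add: lookup_sum lookup_single)
  also have "\<dots> = Poly_Mapping.lookup P k"
    by (cases "k \<in> Poly_Mapping.keys P") (auto simp: when_def in_keys_iff)
  finally show "Poly_Mapping.lookup P k = Poly_Mapping.lookup (\<Sum>M\<in>Poly_Mapping.keys P. Poly_Mapping.single M (Poly_Mapping.lookup P M)) k" by simp
qed

lemma lin_mult_expand:
  fixes P Q :: "'m::comm_monoid_add \<Rightarrow>\<^sub>0 'c::comm_semiring_0"
  assumes "\<And>M. f M 0 = 0" "\<And>M a b. f M (a + b) = f M a + f M b"
  shows "lin f (P * Q) = (\<Sum>M\<in>Poly_Mapping.keys P. \<Sum>N\<in>Poly_Mapping.keys Q. f (M + N) (Poly_Mapping.lookup P M * Poly_Mapping.lookup Q N))"
proof -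
  have "P * Q = (\<Sum>M\<in>Poly_Mapping.keys P. Poly_Mapping.single M (Poly_Mapping.lookup P M)) * (\<Sum>N\<in>Poly_Mapping.keys Q. Poly_Mapping.single N (Poly_Mapping.lookup Q N))"
    using pm_expansion by metis
  also have "\<dots> = (\<Sum>M\<in>Poly_Mapping.keys P. \<Sum>N\<in>Poly_Mapping.keys Q. Poly_Mapping.single (M + N) (Poly_Mapping.lookup P M * Poly_Mapping.lookup Q N))"
    by (simp add: sum_product mult_single)
  finally show ?thesis
    by (simp add: lin_sum[OF assms] lin_single assms)
qed

section \<open>Multivariate polynomials as poly mappings\<close>

type_synonym 'k mp = "nat multiset \<Rightarrow>\<^sub>0 'k"

definition Var :: "nat \<Rightarrow> 'k::comm_semiring_1 mp" where
  "Var i = Poly_Mapping.single {#i#} 1"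

definition ev :: "('k::zero \<Rightarrow> 'd::comm_semiring_1) \<Rightarrow> (nat \<Rightarrow> 'd) \<Rightarrow> 'k mp \<Rightarrow> 'd" where
  "ev e v P = lin (\<lambda>M c. e c * prod_mset (image_mset v M)) P"

definition comp :: "'k::comm_semiring_1 mp \<Rightarrow> (nat \<Rightarrow> 'k mp) \<Rightarrow> 'k mp" where
  "comp P Q = ev (Poly_Mapping.single {#}) Q P"

definition nzin :: "nat set \<Rightarrow> 'k::zero mp \<Rightarrow> bool" where
  "nzin V W \<longleftrightarrow> (\<forall>N\<in>Poly_Mapping.keys W. N \<noteq> {#} \<and> set_mset N \<subseteq> V)"

context
  fixes e :: "'k::comm_semiring_1 \<Rightarrow> 'd::comm_semiring_1"
  assumes e0: "e 0 = 0" and eadd: "\<And>a b. e (a + b) = e a + e b"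
begin

lemma ev_add: "ev e v (P + Q) = ev e v P + ev e v Q"
  unfolding ev_def by (rule lin_add) (simp_all add: e0 eadd distrib_right)

lemma ev_zero [simp]: "ev e v 0 = 0"
  by (simp add: ev_def)

lemma ev_single: "ev e v (Poly_Mapping.single M c) = e c * prod_mset (image_mset v M)"
  unfolding ev_def by (rule lin_single) (simp add: e0)

lemma ev_sum: "ev e v (sum g I) = (\<Sum>i\<in>I. ev e v (g i))"
  unfolding ev_def by (rule lin_sum) (simp_all add: e0 eadd distrib_right)

lemma ev_mult:
  assumes emult: "\<And>a b. e (a * b) = e a * e b"
  shows "ev e v (P * Q) = ev e v P * ev e v Q"
proof -
  have "ev e v (P * Q) = (\<Sum>M\<in>Poly_Mapping.keys P. \<Sum>N\<in>Poly_Mapping.keys Q.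
      e (Poly_Mapping.lookup P M * Poly_Mapping.lookup Q N) * prod_mset (image_mset v (M + N)))"
    unfolding ev_def by (rule lin_mult_expand) (simp_all add: e0 eadd distrib_right)
  also have "\<dots> = (\<Sum>M\<in>Poly_Mapping.keys P. \<Sum>N\<in>Poly_Mapping.keys Q.
      (e (Poly_Mapping.lookup P M) * prod_mset (image_mset v M)) *
      (e (Poly_Mapping.lookup Q N) * prod_mset (image_mset v N)))"
    by (simp add: emult mult_ac)
  also have "\<dots> = ev e v P * ev e v Q"
    by (simp add: ev_def lin_def sum_product)
  finally show ?thesis .
qed

lemma ev_one: "ev e v 1 = e 1"
  by (metis ev_single image_mset_empty mult.right_neutral prod_mset_empty single_one)

lemma ev_cong:
  assumes "\<And>M k. M \<in> Poly_Mapping.keys P \<Longrightarrow> k \<in># M \<Longrightarrow> v k = v' k"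
  shows "ev e v P = ev e v' P"
  unfolding ev_def lin_def
  using assms by (intro sum.cong refl arg_cong2[where f="(*)"] arg_cong[where f=prod_mset] image_mset_cong) auto

end

lemma ev_hom:
  fixes h :: "'d::comm_semiring_1 \<Rightarrow> 'd2::comm_semiring_1"
  assumes h0: "h 0 = 0" and hadd: "\<And>a b. h (a + b) = h a + h b"
    and hmult: "\<And>a b. h (a * b) = h a * h b" and h1: "h 1 = 1"
  shows "h (ev e v P) = ev (h \<circ> e) (h \<circ> v) P"
proof -
  have hs: "h (sum g I) = (\<Sum>i\<in>I. h (g i))" for g :: "'x \<Rightarrow> 'd" and I
    by (induction I rule: infinite_finite_induct) (simp_all add: h0 hadd)
  have hp: "h (prod_mset (image_mset v M)) = prod_mset (image_mset (h \<circ> v) M)" for M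
    by (induction M) (simp_all add: h1 hmult)
  show ?thesis
    unfolding ev_def lin_def by (simp add: hs hmult hp)
qed

lemma single0_add: "Poly_Mapping.single {#} (a + b) = Poly_Mapping.single {#} a + Poly_Mapping.single {#} b"
  by (simp add: single_add)

lemma single0_mult: "Poly_Mapping.single {#} (a * b) = (Poly_Mapping.single {#} a * Poly_Mapping.single {#} b :: 'k::comm_semiring_1 mp)"
  by (simp add: mult_single)

lemma comp_add: "comp (A + B) Q = comp A Q + comp B Q"
  unfolding comp_def by (rule ev_add) (simp_all add: single0_add)

lemma comp_mult: "comp (A * B) Q = comp A Q * comp B Q"
  unfolding comp_def by (rule ev_mult) (simp_all add: single0_add single0_mult)

lemma comp_one: "comp 1 Q = 1"
  unfolding comp_def by (subst ev_one) (simp_all add: single0_add)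

lemma comp_zero [simp]: "comp 0 Q = 0"
  unfolding comp_def by (simp add: single0_add)

lemma comp_single: "comp (Poly_Mapping.single M c) Q = Poly_Mapping.single {#} c * prod_mset (image_mset Q M)"
  unfolding comp_def by (rule ev_single) (simp_all add: single0_add)

lemma prod_Var: "prod_mset (image_mset Var M) = (Poly_Mapping.single M 1 :: 'k::comm_semiring_1 mp)"
  by (induction M) (simp_all add: Var_def mult_single)

lemma comp_Var: "comp P Var = (P :: 'k::comm_semiring_1 mp)"
proof -
  have "comp P Var = comp (\<Sum>M\<in>Poly_Mapping.keys P. Poly_Mapping.single M (Poly_Mapping.lookup P M)) Var"
    using pm_expansion by metis
  also have "\<dots> = (\<Sum>M\<in>Poly_Mapping.keys P. Poly_Mapping.single M (Poly_Mapping.lookup P M))"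
    unfolding comp_def
    by (subst ev_sum) (simp_all add: single0_add ev_single prod_Var mult_single)
  finally show ?thesis using pm_expansion by metis
qed

lemma comp_Var_left: "comp (Var i) Q = Q i"
  by (simp add: Var_def comp_single)

lemma comp_comp: "comp (comp P Q) Q' = comp P (\<lambda>k. comp (Q k) Q')"
proof -
  have "comp (comp P Q) Q' = ev ((\<lambda>W. comp W Q') \<circ> Poly_Mapping.single {#}) ((\<lambda>W. comp W Q') \<circ> Q) P"
    unfolding comp_def[of P]
    by (rule ev_hom) (simp_all add: comp_add comp_mult comp_one)
  also have "\<dots> = comp P (\<lambda>k. comp (Q k) Q')"
    by (simp add: comp_def o_def ev_single single0_add)
  finally show ?thesis .
qed

lemma comp_cong:
  assumes "\<And>M k. M \<in> Poly_Mapping.keys P \<Longrightarrow> k \<in># M \<Longrightarrow> Q k = Q' k"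
  shows "comp P Q = comp P Q'"
  unfolding comp_def by (rule ev_cong) (simp_all add: single0_add assms)

lemma nzin_add:
  assumes "nzin V A" "nzin V B" shows "nzin V (A + B)"
  unfolding nzin_def
proof (intro ballI)
  fix N assume N: "N \<in> Poly_Mapping.keys (A + B)"
  have "N \<in> Poly_Mapping.keys A \<or> N \<in> Poly_Mapping.keys B"
    using keys_add[of A B] N by blast
  then show "N \<noteq> {#} \<and> set_mset N \<subseteq> V" using assms unfolding nzin_def by blast
qed

lemma nzin_zero [simp]: "nzin V 0"
  by (simp add: nzin_def)

lemma nzin_sum: "(\<And>i. i \<in> I \<Longrightarrow> nzin V (g i)) \<Longrightarrow> nzin V (sum g I)"
proof (induction I rule: infinite_finite_induct)
  case (insert x F)
  then show ?case by (simp add: nzin_add)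
qed simp_all

lemma nzin_mult:
  fixes A B :: "'k::comm_semiring_0 mp"
  assumes "nzin V A" "\<forall>N\<in>Poly_Mapping.keys B. set_mset N \<subseteq> V"
  shows "nzin V (A * B)"
  unfolding nzin_def
proof (intro ballI)
  fix N assume "N \<in> Poly_Mapping.keys (A * B)"
  then obtain a b where ab: "N = a + b" "a \<in> Poly_Mapping.keys A" "b \<in> Poly_Mapping.keys B"
    using keys_mult[of A B] by blast
  have "a \<noteq> {#}" "set_mset a \<subseteq> V" using assms(1) ab(2) unfolding nzin_def by blast+
  moreover have "set_mset b \<subseteq> V" using assms(2) ab(3) by blast
  ultimately show "N \<noteq> {#} \<and> set_mset N \<subseteq> V"
    using ab(1) by (metis empty_eq_union set_mset_union sup.boundedI)
qed

lemma nzin_scal: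
  fixes B :: "'k::comm_semiring_1 mp"
  assumes "nzin V B"
  shows "nzin V (Poly_Mapping.single {#} c * B)"
  unfolding nzin_def
proof (intro ballI)
  fix N assume "N \<in> Poly_Mapping.keys (Poly_Mapping.single {#} c * B)"
  then obtain a b where ab: "N = a + b" "a \<in> Poly_Mapping.keys (Poly_Mapping.single {#} c)" "b \<in> Poly_Mapping.keys B"
    using keys_mult[of "Poly_Mapping.single {#} c" B] by blast
  then have "a = {#}" by (metis empty_iff insert_iff keys_single)
  then show "N \<noteq> {#} \<and> set_mset N \<subseteq> V"
    using assms ab unfolding nzin_def by (metis add_0)
qed

lemma nzin_prod:
  fixes Q :: "nat \<Rightarrow> 'k::comm_semiring_1 mp"
  assumes "M \<noteq> {#}" "\<And>k. k \<in># M \<Longrightarrow> nzin V (Q k)"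
  shows "nzin V (prod_mset (image_mset Q M))"
  using assms
proof (induction M)
  case empty then show ?case by simp
next
  case (add k M)
  show ?case
  proof (cases "M = {#}")
    case True then show ?thesis using add by simp
  next
    case False
    then have "nzin V (prod_mset (image_mset Q M))" using add by simp
    then have "\<forall>N\<in>Poly_Mapping.keys (prod_mset (image_mset Q M)). set_mset N \<subseteq> V"
      by (simp add: nzin_def)
    then show ?thesis using add.prems nzin_mult[of V "Q k" "prod_mset (image_mset Q M)"] by simp
  qed
qed

lemma comp_nzin:
  fixes Q :: "nat \<Rightarrow> 'k::comm_semiring_1 mp"
  assumes "\<And>M. M \<in> Poly_Mapping.keys P \<Longrightarrow> M \<noteq> {#}"
    and "\<And>M k. M \<in> Poly_Mapping.keys P \<Longrightarrow> k \<in># M \<Longrightarrow> nzin V (Q k)"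
  shows "nzin V (comp P Q)"
proof -
  have "comp P Q = comp (\<Sum>M\<in>Poly_Mapping.keys P. Poly_Mapping.single M (Poly_Mapping.lookup P M)) Q"
    using pm_expansion by metis
  also have "\<dots> = (\<Sum>M\<in>Poly_Mapping.keys P. Poly_Mapping.single {#} (Poly_Mapping.lookup P M) * prod_mset (image_mset Q M))"
    unfolding comp_def
    by (subst ev_sum) (simp_all add: single0_add ev_single)
  finally show ?thesis
    by (auto intro!: nzin_sum nzin_scal nzin_prod assms)
qed

lemma comp_const:
  fixes Q :: "nat \<Rightarrow> 'k::comm_ring_1 mp"
  assumes "\<And>M k. M \<in> Poly_Mapping.keys P \<Longrightarrow> k \<in># M \<Longrightarrow> nzin UNIV (Q k)"
  shows "Poly_Mapping.lookup (comp P Q) {#} = Poly_Mapping.lookup P {#}"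
proof -
  define c where "c = Poly_Mapping.lookup P {#}"
  define P' where "P' = P - Poly_Mapping.single {#} c"
  have lk: "Poly_Mapping.lookup P' M = (if M = {#} then 0 else Poly_Mapping.lookup P M)" for M
    by (simp add: P'_def c_def lookup_minus lookup_single when_def)
  have kP': "Poly_Mapping.keys P' \<subseteq> Poly_Mapping.keys P - {{#}}"
    using lk by (auto simp: in_keys_iff split: if_splits)
  have "nzin UNIV (comp P' Q)"
    by (rule comp_nzin) (use kP' assms in auto)
  then have z: "Poly_Mapping.lookup (comp P' Q) {#} = 0"
    by (auto simp: nzin_def in_keys_iff)
  have "P = P' + Poly_Mapping.single {#} c" by (simp add: P'_def)
  then have "comp P Q = comp P' Q + Poly_Mapping.single {#} c"
    by (simp add: comp_add comp_single)
  then show ?thesis using z by (simp add: lookup_add c_def)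
qed

definition Ev :: "('k::field \<Rightarrow> 'a::comm_ring \<Rightarrow> 'a) \<Rightarrow> (nat \<Rightarrow> 'a) \<Rightarrow> 'k mp \<Rightarrow> 'a" where
  "Ev sc w Z = peval sc (Poly_Mapping.lookup Z) w"

lemma Ev_lin: "Ev sc w Z = lin (\<lambda>M c. sc c (Defs.monom w M)) Z"
proof -
  have "{M. Poly_Mapping.lookup Z M \<noteq> 0} = Poly_Mapping.keys Z" by (auto simp: in_keys_iff)
  then show ?thesis unfolding Ev_def peval_def lin_def by simp
qed

context
  fixes sc :: "'k::field \<Rightarrow> 'a::comm_ring \<Rightarrow> 'a"
  assumes ca: "comm_algebra sc"
begin

lemma md: "module sc" using ca by (simp add: comm_algebra_def)

lemma sc_mult_left: "sc c (u * v) = sc c u * v"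
  using ca by (simp add: comm_algebra_def)

lemma sc_mult: "sc a u * sc b v = sc (a * b) (u * v)"
proof -
  have "sc a u * sc b v = sc a (u * sc b v)" by (simp add: sc_mult_left)
  also have "u * sc b v = sc b (v * u)" by (metis sc_mult_left mult.commute)
  also have "sc a (sc b (v * u)) = sc (a * b) (u * v)"
    by (simp add: module.scale_scale[OF md] mult.commute)
  finally show ?thesis .
qed

lemma sc0: "sc 0 u = 0" by (simp add: module.scale_zero_left[OF md])
lemma scadd: "sc (a + b) u = sc a u + sc b u" by (simp add: module.scale_left_distrib[OF md])

lemma Ev_add: "Ev sc w (A + B) = Ev sc w A + Ev sc w B"
  unfolding Ev_lin by (rule lin_add) (simp_all add: sc0 scadd)

lemma Ev_zero [simp]: "Ev sc w 0 = 0"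
  unfolding Ev_lin by simp

lemma Ev_single: "Ev sc w (Poly_Mapping.single M c) = sc c (Defs.monom w M)"
  unfolding Ev_lin by (rule lin_single) (simp add: sc0)

lemma Ev_sum: "Ev sc w (sum g I) = (\<Sum>i\<in>I. Ev sc w (g i))"
  unfolding Ev_lin by (rule lin_sum) (simp_all add: sc0 scadd)

lemma Ev_scal: "Ev sc w (Poly_Mapping.single {#} c * W) = sc c (Ev sc w W)"
proof (cases "c = 0")
  case True then show ?thesis by (simp add: sc0)
next
  case False
  have "Ev sc w (Poly_Mapping.single {#} c * W) =
     (\<Sum>M\<in>Poly_Mapping.keys (Poly_Mapping.single {#} c). \<Sum>N\<in>Poly_Mapping.keys W.
        sc (Poly_Mapping.lookup (Poly_Mapping.single {#} c) M * Poly_Mapping.lookup W N) (Defs.monom w (M + N)))"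
    unfolding Ev_lin by (rule lin_mult_expand) (simp_all add: sc0 scadd)
  also have "\<dots> = (\<Sum>N\<in>Poly_Mapping.keys W. sc c (sc (Poly_Mapping.lookup W N) (Defs.monom w N)))"
    using False by (simp add: module.scale_scale[OF md])
  also have "\<dots> = sc c (Ev sc w W)"
    by (simp add: Ev_lin lin_def module.scale_sum_right[OF md])
  finally show ?thesis .
qed

lemma Ev_mult:
  assumes "nzin UNIV A" "nzin UNIV B"
  shows "Ev sc w (A * B) = Ev sc w A * Ev sc w B"
proof -
  have "Ev sc w (A * B) =
     (\<Sum>M\<in>Poly_Mapping.keys A. \<Sum>N\<in>Poly_Mapping.keys B.
        sc (Poly_Mapping.lookup A M * Poly_Mapping.lookup B N) (Defs.monom w (M + N)))"
    unfolding Ev_lin by (rule lin_mult_expand) (simp_all add: sc0 scadd)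
  also have "\<dots> = (\<Sum>M\<in>Poly_Mapping.keys A. \<Sum>N\<in>Poly_Mapping.keys B.
        sc (Poly_Mapping.lookup A M) (Defs.monom w M) * sc (Poly_Mapping.lookup B N) (Defs.monom w N))"
  proof (intro sum.cong refl)
    fix M N assume "M \<in> Poly_Mapping.keys A" "N \<in> Poly_Mapping.keys B"
    then have "M \<noteq> {#}" "N \<noteq> {#}" using assms unfolding nzin_def by auto
    then show "sc (Poly_Mapping.lookup A M * Poly_Mapping.lookup B N) (Defs.monom w (M + N)) =
        sc (Poly_Mapping.lookup A M) (Defs.monom w M) * sc (Poly_Mapping.lookup B N) (Defs.monom w N)"
      by (simp add: monom_add sc_mult)
  qed
  also have "\<dots> = Ev sc w A * Ev sc w B"
    by (simp add: Ev_lin lin_def sum_product)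
  finally show ?thesis .
qed

lemma Ev_Var: "Ev sc w (Var k) = w k"
  by (simp add: Var_def Ev_single monom_single module.scale_one[OF md])

lemma nzin_Var: "nzin V (Var k) \<longleftrightarrow> k \<in> V"
  by (simp add: nzin_def Var_def)

lemma Ev_prod:
  assumes "M \<noteq> {#}" "\<And>k. k \<in># M \<Longrightarrow> nzin UNIV (Q k)"
  shows "Ev sc w (prod_mset (image_mset Q M)) = Defs.monom (\<lambda>k. Ev sc w (Q k)) M"
  using assms
proof (induction M)
  case empty then show ?case by simp
next
  case (add k M)
  show ?case
  proof (cases "M = {#}")
    case True then show ?thesis by (simp add: monom_single)
  next
    case False
    have nz: "nzin UNIV (prod_mset (image_mset Q M))"
      using False add.prems by (intro nzin_prod) auto
    have "Ev sc w (prod_mset (image_mset Q (add_mset k M))) = Ev sc w (Q k * prod_mset (image_mset Q M))"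
      by simp
    also have "\<dots> = Ev sc w (Q k) * Ev sc w (prod_mset (image_mset Q M))"
      using nz add.prems by (intro Ev_mult) auto
    also have "\<dots> = Defs.monom (\<lambda>k. Ev sc w (Q k)) (add_mset k M)"
      using add False monom_add[of "{#k#}" M "\<lambda>k. Ev sc w (Q k)"] by (simp add: monom_single)
    finally show ?thesis .
  qed
qed

lemma CL:
  assumes P: "\<And>M. M \<in> Poly_Mapping.keys P \<Longrightarrow> M \<noteq> {#} \<and> set_mset M \<subseteq> V"
    and Q: "\<And>i. i \<in> V \<Longrightarrow> nzin UNIV (Q i) \<and> y i = Ev sc w (Q i)"
  shows "peval sc (Poly_Mapping.lookup P) y = Ev sc w (comp P Q)"
proof -
  have "comp P Q = comp (\<Sum>M\<in>Poly_Mapping.keys P. Poly_Mapping.single M (Poly_Mapping.lookup P M)) Q"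
    using pm_expansion by metis
  also have "\<dots> = (\<Sum>M\<in>Poly_Mapping.keys P. Poly_Mapping.single {#} (Poly_Mapping.lookup P M) * prod_mset (image_mset Q M))"
    unfolding comp_def
    by (subst ev_sum) (simp_all add: single0_add ev_single)
  finally have "Ev sc w (comp P Q) = (\<Sum>M\<in>Poly_Mapping.keys P. sc (Poly_Mapping.lookup P M) (Ev sc w (prod_mset (image_mset Q M))))"
    by (simp add: Ev_sum Ev_scal)
  also have "\<dots> = (\<Sum>M\<in>Poly_Mapping.keys P. sc (Poly_Mapping.lookup P M) (Defs.monom y M))"
  proof (intro sum.cong refl arg_cong[where f="sc _"])
    fix M assume M: "M \<in> Poly_Mapping.keys P"
    then have "Ev sc w (prod_mset (image_mset Q M)) = Defs.monom (\<lambda>k. Ev sc w (Q k)) M"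
      using P Q by (intro Ev_prod) auto
    also have "\<dots> = Defs.monom y M"
    proof (rule monom_cong)
      fix k assume "k \<in># M"
      then have "k \<in> V" using P[OF M] by auto
      then show "Ev sc w (Q k) = y k" using Q by simp
    qed
    finally show "Ev sc w (prod_mset (image_mset Q M)) = Defs.monom y M" .
  qed
  also have "\<dots> = peval sc (Poly_Mapping.lookup P) y"
    using Ev_lin[of sc y P] by (simp add: Ev_def lin_def)
  finally show ?thesis by simp
qed

end

definition ec :: "'k::comm_ring_1 \<Rightarrow> 'k mp poly" where
  "ec c = [:Poly_Mapping.single {#} c:]"

lemma ec0: "ec 0 = 0" by (simp add: ec_def)
lemma ecadd: "ec (a + b) = ec a + ec b" by (simp add: ec_def single_add)
lemma ecmult: "ec (a * b) = ec a * ec b" by (simp add: ec_def mult_single mult_to_poly mult.commute)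
lemma ec1: "ec 1 = 1" by (simp add: ec_def one_pCons)

lemma const_poly_ev:
  fixes Z :: "nat \<Rightarrow> 'k::comm_ring_1 mp"
  shows "ev ec (\<lambda>i. [:Z i:]) P = [:comp P Z:]"
proof -
  have "[:comp P Z:] = ev ((\<lambda>W. [:W:]) \<circ> Poly_Mapping.single {#}) ((\<lambda>W. [:W:]) \<circ> Z) P"
    unfolding comp_def by (rule ev_hom) (simp_all add: mult_to_poly one_pCons)
  also have "\<dots> = ev ec (\<lambda>i. [:Z i:]) P"
    by (simp add: ec_def[abs_def] o_def)
  finally show ?thesis by simp
qed

lemma split_j:
  fixes P :: "'k::comm_semiring_1 mp" and j :: nat
  defines "P0 \<equiv> (\<Sum>M\<in>{M\<in>Poly_Mapping.keys P. j \<notin># M}. Poly_Mapping.single M (Poly_Mapping.lookup P M))"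
    and "P1 \<equiv> (\<Sum>M\<in>{M\<in>Poly_Mapping.keys P. j \<in># M}. Poly_Mapping.single (M - {#j#}) (Poly_Mapping.lookup P M))"
  shows "P = P0 + Var j * P1"
    and "Poly_Mapping.keys P0 \<subseteq> {M\<in>Poly_Mapping.keys P. j \<notin># M}"
    and "Poly_Mapping.keys P1 \<subseteq> (\<lambda>M. M - {#j#}) ` {M\<in>Poly_Mapping.keys P. j \<in># M}"
proof -
  have "P = (\<Sum>M\<in>Poly_Mapping.keys P. Poly_Mapping.single M (Poly_Mapping.lookup P M))"
    using pm_expansion by metis
  also have "\<dots> = P0 + (\<Sum>M\<in>{M\<in>Poly_Mapping.keys P. j \<in># M}. Poly_Mapping.single M (Poly_Mapping.lookup P M))"
    unfolding P0_def
    by (subst sum.union_disjoint[symmetric]) (auto intro!: sum.cong)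
  also have "(\<Sum>M\<in>{M\<in>Poly_Mapping.keys P. j \<in># M}. Poly_Mapping.single M (Poly_Mapping.lookup P M)) = Var j * P1"
    unfolding P1_def sum_distrib_left
  proof (intro sum.cong refl)
    fix M assume "M \<in> {M\<in>Poly_Mapping.keys P. j \<in># M}"
    then have "M = {#j#} + (M - {#j#})" by simp
    then show "Poly_Mapping.single M (Poly_Mapping.lookup P M) = Var j * Poly_Mapping.single (M - {#j#}) (Poly_Mapping.lookup P M)"
      by (simp add: Var_def mult_single)
  qed
  finally show "P = P0 + Var j * P1" .
  show "Poly_Mapping.keys P0 \<subseteq> {M\<in>Poly_Mapping.keys P. j \<notin># M}"
    unfolding P0_def using keys_sum by (fastforce split: if_splits)
  show "Poly_Mapping.keys P1 \<subseteq> (\<lambda>M. M - {#j#}) ` {M\<in>Poly_Mapping.keys P. j \<in># M}"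
    unfolding P1_def using keys_sum by (fastforce split: if_splits)
qed

lemma ev_Var: "ev ec v (Var j) = v j"
  by (simp add: Var_def ev_single ec0 ecadd ec1)

lemma key_step:
  fixes Z :: "nat \<Rightarrow> 'k::field mp" and v :: "nat \<Rightarrow> 'k mp poly" and P :: "'k mp"
  assumes indep: "\<And>G. G \<noteq> 0 \<Longrightarrow> (\<forall>M\<in>Poly_Mapping.keys G. set_mset M \<subseteq> V0) \<Longrightarrow> comp G Z \<noteq> 0"
    and vV: "\<And>i. i \<in> V0 \<Longrightarrow> v i = [:Z i:]" and dp: "Polynomial.degree (v j) \<ge> 1"
    and PV: "\<forall>M\<in>Poly_Mapping.keys P. set_mset M \<subseteq> insert j V0" and P0: "P \<noteq> 0"
    and P1_def: "P1 = (\<Sum>M\<in>{M\<in>Poly_Mapping.keys P. j \<in># M}. Poly_Mapping.single (M - {#j#}) (Poly_Mapping.lookup P M))"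
    and IH: "P1 \<noteq> 0 \<Longrightarrow> ev ec v P1 \<noteq> 0"
  shows "ev ec v P \<noteq> 0"
proof -
  define P0 where "P0 = (\<Sum>M\<in>{M\<in>Poly_Mapping.keys P. j \<notin># M}. Poly_Mapping.single M (Poly_Mapping.lookup P M))"
  have sp: "P = P0 + Var j * P1" "Poly_Mapping.keys P0 \<subseteq> {M\<in>Poly_Mapping.keys P. j \<notin># M}"
    unfolding P0_def P1_def by (rule split_j)+
  have P0V: "\<forall>M\<in>Poly_Mapping.keys P0. set_mset M \<subseteq> V0"
    using sp(2) PV by blast
  have evP0: "ev ec v P0 = [:comp P0 Z:]"
  proof -
    have "ev ec v P0 = ev ec (\<lambda>i. [:Z i:]) P0"
      by (rule ev_cong[OF ec0 ecadd]) (use P0V vV in \<open>meson in_mono\<close>)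
    then show ?thesis by (simp add: const_poly_ev)
  qed
  have evP: "ev ec v P = [:comp P0 Z:] + v j * ev ec v P1"
  proof -
    have "ev ec v P = ev ec v P0 + ev ec v (Var j) * ev ec v P1"
      by (subst sp(1)) (simp only: ev_add[OF ec0 ecadd] ev_mult[OF ec0 ecadd ecmult])
    then show ?thesis by (simp only: evP0 ev_Var)
  qed
  show ?thesis
  proof (cases "P1 = 0")
    case True
    then have "P0 = P" using sp(1) by simp
    then have "comp P0 Z \<noteq> 0" using indep P0V P0 by blast
    then show ?thesis using evP True by (simp add: ev_zero[OF ec0 ecadd])
  next
    case False
    then have "ev ec v P1 \<noteq> 0" using IH by blast
    moreover have "v j \<noteq> 0" using dp by auto
    ultimately have q0: "v j * ev ec v P1 \<noteq> 0" and
      dq: "Polynomial.degree (v j * ev ec v P1) \<ge> 1"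
      using dp by (auto simp: degree_mult_eq)
    show ?thesis
    proof
      assume "ev ec v P = 0"
      then have "v j * ev ec v P1 = - [:comp P0 Z:]" using evP by (simp add: add_eq_0_iff)
      then have "Polynomial.degree (v j * ev ec v P1) = 0" by simp
      then show False using dq by simp
    qed
  qed
qed

lemma core_ind:
  fixes Z :: "nat \<Rightarrow> 'k::field mp" and v :: "nat \<Rightarrow> 'k mp poly"
  assumes indep: "\<And>G. G \<noteq> 0 \<Longrightarrow> (\<forall>M\<in>Poly_Mapping.keys G. set_mset M \<subseteq> V0) \<Longrightarrow> comp G Z \<noteq> 0"
    and vV: "\<And>i. i \<in> V0 \<Longrightarrow> v i = [:Z i:]" and dp: "Polynomial.degree (v j) \<ge> 1"
  shows "(\<forall>M\<in>Poly_Mapping.keys P. set_mset M \<subseteq> insert j V0) \<Longrightarrow> P \<noteq> 0 \<Longrightarrow>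
     (\<forall>M\<in>Poly_Mapping.keys P. count M j \<le> k) \<Longrightarrow> ev ec v P \<noteq> 0"
proof (induction k arbitrary: P)
  case 0
  have e: "{M\<in>Poly_Mapping.keys P. j \<in># M} = {}" using "0.prems"(3) by (auto simp: count_eq_zero_iff)
  have "(\<Sum>M\<in>{M\<in>Poly_Mapping.keys P. j \<in># M}. Poly_Mapping.single (M - {#j#}) (Poly_Mapping.lookup P M)) = 0"
    unfolding e by simp
  then show ?case using key_step[OF indep vV dp "0.prems"(1) "0.prems"(2) refl] by blast
next
  case (Suc k)
  define P1 where "P1 = (\<Sum>M\<in>{M\<in>Poly_Mapping.keys P. j \<in># M}. Poly_Mapping.single (M - {#j#}) (Poly_Mapping.lookup P M))"
  have k1: "Poly_Mapping.keys P1 \<subseteq> (\<lambda>M. M - {#j#}) ` {M\<in>Poly_Mapping.keys P. j \<in># M}"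
    unfolding P1_def by (rule split_j)
  have IHP1: "P1 \<noteq> 0 \<Longrightarrow> ev ec v P1 \<noteq> 0"
  proof (rule Suc.IH)
    show "\<forall>M\<in>Poly_Mapping.keys P1. set_mset M \<subseteq> insert j V0"
    proof
      fix M assume "M \<in> Poly_Mapping.keys P1"
      then obtain N where "N \<in> Poly_Mapping.keys P" "M = N - {#j#}" using k1 by blast
      then show "set_mset M \<subseteq> insert j V0" using Suc.prems(1)
        by (meson in_diffD subset_eq)
    qed
    show "\<forall>M\<in>Poly_Mapping.keys P1. count M j \<le> k"
    proof
      fix M assume "M \<in> Poly_Mapping.keys P1"
      then obtain N where "N \<in> Poly_Mapping.keys P" "M = N - {#j#}" using k1 by blast
      then show "count M j \<le> k" using Suc.prems(3) by auto
    qed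
  qed
  show ?case
    by (rule key_step[OF indep vV dp Suc.prems(1) Suc.prems(2) P1_def IHP1])
qed

definition thv :: "nat set \<Rightarrow> nat \<Rightarrow> 'k::comm_ring_1 mp poly" where
  "thv IS k = (if k \<in> IS then [:Var k:] else Polynomial.monom (Var k) 1)"

lemma prod_thv:
  "prod_mset (image_mset (thv IS) M) =
     (Polynomial.monom (Poly_Mapping.single M 1) (size (filter_mset (\<lambda>k. k \<notin> IS) M)) :: 'k::comm_ring_1 mp poly)"
proof (induction M)
  case empty then show ?case by (simp add: monom_0 one_pCons)
next
  case (add k M)
  have vm: "Var k * Poly_Mapping.single M 1 = (Poly_Mapping.single (add_mset k M) 1 :: 'k mp)"
    by (simp add: Var_def mult_single)
  show ?case
    using add vm by (simp add: thv_def mult_monom monom_0[symmetric] del: monom_0)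
qed

lemma Theta_const:
  fixes W :: "'k::comm_ring_1 mp"
  assumes "\<forall>M\<in>Poly_Mapping.keys W. set_mset M \<subseteq> IS"
  shows "ev ec (thv IS) W = [:W:]"
proof -
  have "ev ec (thv IS) W = ev ec (\<lambda>k. [:Var k:]) W"
    by (rule ev_cong) (use ec0 ecadd assms in \<open>auto simp: thv_def\<close>)
  then show ?thesis by (simp add: const_poly_ev comp_Var)
qed

lemma Theta_deg:
  fixes W :: "'k::comm_ring_1 mp"
  assumes M0: "M0 \<in> Poly_Mapping.keys W" "k0 \<in># M0" "k0 \<notin> IS"
  shows "Polynomial.degree (ev ec (thv IS) W) \<ge> 1"
proof -
  define d where "d M = size (filter_mset (\<lambda>k. k \<notin> IS) M)" for M :: "nat multiset"
  have "ev ec (thv IS) W = ev ec (thv IS) (\<Sum>M\<in>Poly_Mapping.keys W. Poly_Mapping.single M (Poly_Mapping.lookup W M))"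
    using pm_expansion by metis
  also have "\<dots> = (\<Sum>M\<in>Poly_Mapping.keys W. Polynomial.monom (Poly_Mapping.single M (Poly_Mapping.lookup W M)) (d M))"
  proof -
    have "ev ec (thv IS) (Poly_Mapping.single M c) = Polynomial.monom (Poly_Mapping.single M c) (d M)" for M and c :: 'k
    proof -
      have "ev ec (thv IS) (Poly_Mapping.single M c) = ec c * prod_mset (image_mset (thv IS) M)"
        by (rule ev_single[OF ec0 ecadd])
      also have "\<dots> = Polynomial.monom (Poly_Mapping.single {#} c) 0 * Polynomial.monom (Poly_Mapping.single M 1) (d M)"
        by (simp add: prod_thv ec_def d_def monom_0)
      also have "\<dots> = Polynomial.monom (Poly_Mapping.single M c) (d M)"
        by (simp add: mult_monom mult_single)
      finally show ?thesis .
    qed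
    then show ?thesis by (simp add: ev_sum[OF ec0 ecadd])
  qed
  finally have ev: "ev ec (thv IS) W = \<dots>" .
  have "Poly_Mapping.lookup (Polynomial.coeff (ev ec (thv IS) W) (d M0)) M0 =
      (\<Sum>M\<in>Poly_Mapping.keys W. if M = M0 then Poly_Mapping.lookup W M0 else 0)"
    unfolding ev coeff_sum lookup_sum
    by (intro sum.cong refl) (auto simp: coeff_monom lookup_single when_def)
  also have "\<dots> = Poly_Mapping.lookup W M0" using M0(1) by simp
  finally have "Polynomial.coeff (ev ec (thv IS) W) (d M0) \<noteq> 0"
    using M0(1) by (auto simp: in_keys_iff)
  then have "d M0 \<le> Polynomial.degree (ev ec (thv IS) W)" by (rule le_degree)
  moreover have "d M0 \<ge> 1"
  proof -
    have "k0 \<in># filter_mset (\<lambda>k. k \<notin> IS) M0" using M0 by simp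
    then show ?thesis unfolding d_def by (metis One_nat_def Suc_leI nonempty_has_size size_eq_0_iff_empty empty_iff set_mset_empty not_gr_zero)
  qed
  ultimately show ?thesis by simp
qed

lemma core:
  fixes Z :: "nat \<Rightarrow> 'k::field mp" and P :: "'k mp"
  assumes indep: "\<And>G. G \<noteq> 0 \<Longrightarrow> (\<forall>M\<in>Poly_Mapping.keys G. set_mset M \<subseteq> V0) \<Longrightarrow> comp G Z \<noteq> 0"
    and ZIS: "\<And>i. i \<in> V0 \<Longrightarrow> \<forall>M\<in>Poly_Mapping.keys (Z i). set_mset M \<subseteq> IS"
    and M0: "M0 \<in> Poly_Mapping.keys (Z j)" "k0 \<in># M0" "k0 \<notin> IS"
    and PV: "\<forall>M\<in>Poly_Mapping.keys P. set_mset M \<subseteq> insert j V0" and P0: "P \<noteq> 0"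
  shows "comp P Z \<noteq> 0"
proof
  assume c0: "comp P Z = 0"
  define v where "v = ev ec (thv IS) \<circ> Z"
  have "ev ec (thv IS) (comp P Z) = ev (ev ec (thv IS) \<circ> Poly_Mapping.single {#}) v P"
    unfolding comp_def v_def
    by (rule ev_hom) (simp_all add: ev_add ev_mult ec0 ecadd ecmult ev_one ec1)
  also have "ev ec (thv IS) \<circ> Poly_Mapping.single {#} = ec"
    by (rule ext) (simp add: ev_single ec0 ecadd)
  finally have z: "ev ec v P = 0" using c0 by (simp add: ev_zero[OF ec0 ecadd])
  have vV: "v i = [:Z i:]" if "i \<in> V0" for i
    using Theta_const ZIS[OF that] by (simp add: v_def)
  have dp: "Polynomial.degree (v j) \<ge> 1"
    unfolding v_def using Theta_deg[OF M0] by simp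
  have "ev ec v P \<noteq> 0"
    by (rule core_ind[OF indep vV dp PV P0, of "\<Sum>M\<in>Poly_Mapping.keys P. count M j"])
       (auto intro: member_le_sum)
  then show False using z by simp
qed

lemma nzin_Var': "nzin V (Var k) \<longleftrightarrow> k \<in> V"
  by (simp add: nzin_def Var_def)

lemma nzin_mono: "V \<subseteq> V' \<Longrightarrow> nzin V Z \<Longrightarrow> nzin V' Z"
  unfolding nzin_def by blast

lemma keys_lookup_set: "{M. Poly_Mapping.lookup Z M \<noteq> 0} = Poly_Mapping.keys Z"
  by (auto simp: in_keys_iff)

lemma nc_poly_lookup: "nzin {..<n} Z \<Longrightarrow> nc_poly n (Poly_Mapping.lookup Z)"
  unfolding nc_poly_def nzin_def keys_lookup_set by (auto simp: in_keys_iff[symmetric])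

lemma nz_exists: "Z \<noteq> 0 \<Longrightarrow> \<exists>M. Poly_Mapping.lookup Z M \<noteq> 0"
  by (metis lookup_zero poly_mapping_eqI)

lemma lookup_Abs:
  assumes "finite {M. P M \<noteq> 0}"
  shows "Poly_Mapping.lookup (Abs_poly_mapping P) = P"
  using assms by (simp add: Abs_poly_mapping_inverse)

lemma list_enum:
  assumes "finite V"
  obtains f :: "nat \<Rightarrow> 'b" and nv where "f ` {..<nv} = V" "inj_on f {..<nv}"
proof -
  obtain vs where vs: "distinct vs" "set vs = V" using finite_distinct_list[OF assms] by blast
  have "(!) vs ` {..<length vs} = V" using vs(2) by (auto simp: in_set_conv_nth)
  moreover have "inj_on ((!) vs) {..<length vs}" using vs(1) by (simp add: inj_on_def nth_eq_iff_index_eq)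
  ultimately show ?thesis using that by blast
qed

lemma SFG_V:
  fixes sc :: "'k::field \<Rightarrow> 'a::comm_ring \<Rightarrow> 'a"
  assumes ca: "comm_algebra sc" and sfg: "SFG sc R" and fin: "finite V" and inj: "inj_on y V"
    and yR: "y ` V \<subseteq> R" and G0: "G \<noteq> 0" and nz: "nzin V G"
  shows "peval sc (Poly_Mapping.lookup G) y \<noteq> 0"
proof
  assume pz: "peval sc (Poly_Mapping.lookup G) y = 0"
  obtain f :: "nat \<Rightarrow> nat" and nv where fim: "f ` {..<nv} = V" and finj: "inj_on f {..<nv}"
    using list_enum[OF fin] by blast
  define h where "h = the_inv_into {..<nv} f"
  have hV: "h k < nv \<and> f (h k) = k" if "k \<in> V" for k
    using that fim finj the_inv_into_into[OF finj, of k] f_the_inv_into_f[OF finj, of k]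
    unfolding h_def by auto
  define G' where "G' = comp G (\<lambda>k. Var (h k))"
  have nzG': "nzin {..<nv} G'"
    unfolding G'_def
  proof (rule comp_nzin)
    fix M assume "M \<in> Poly_Mapping.keys G" then show "M \<noteq> {#}" using nz by (auto simp: nzin_def)
  next
    fix M k assume "M \<in> Poly_Mapping.keys G" "k \<in># M"
    then have "k \<in> V" using nz by (auto simp: nzin_def)
    then show "nzin {..<nv} (Var (h k))" using hV by (simp add: nzin_Var')
  qed
  have eq: "peval sc (Poly_Mapping.lookup G) y = Ev sc (y \<circ> f) G'"
    unfolding G'_def
  proof (rule CL[OF ca])
    fix M assume "M \<in> Poly_Mapping.keys G" then show "M \<noteq> {#} \<and> set_mset M \<subseteq> V" using nz by (auto simp: nzin_def)
  next
    fix i assume "i \<in> V"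
    then show "nzin UNIV (Var (h i)) \<and> y i = Ev sc (y \<circ> f) (Var (h i))"
      using hV by (simp add: nzin_Var' Ev_Var[OF ca])
  qed
  have G'0: "G' \<noteq> 0"
  proof
    assume "G' = 0"
    have "comp G' (\<lambda>i. Var (f i)) = comp G (\<lambda>k. comp (Var (h k)) (\<lambda>i. Var (f i)))"
      unfolding G'_def by (rule comp_comp)
    also have "\<dots> = comp G (\<lambda>k. Var (f (h k)))" by (simp add: comp_Var_left)
    also have "\<dots> = comp G Var"
    proof (rule comp_cong)
      fix M k assume "M \<in> Poly_Mapping.keys G" "k \<in># M"
      then have "k \<in> V" using nz by (auto simp: nzin_def)
      then show "Var (f (h k)) = Var k" using hV by simp
    qed
    also have "\<dots> = G" by (rule comp_Var)
    finally show False using \<open>G' = 0\<close> G0 by simp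
  qed
  have "peval sc (Poly_Mapping.lookup G') (y \<circ> f) \<noteq> 0"
    using sfg unfolding SFG_def
  proof (elim allE impE)
    show "nc_poly nv (Poly_Mapping.lookup G') \<and> (\<exists>M. Poly_Mapping.lookup G' M \<noteq> 0) \<and>
      inj_on (y \<circ> f) {..<nv} \<and> (y \<circ> f) ` {..<nv} \<subseteq> R"
      using nc_poly_lookup[OF nzG'] nz_exists[OF G'0] comp_inj_on[OF finj] inj yR fim
      by (auto simp: image_comp[symmetric])
  qed
  then show False using eq pz by (simp add: Ev_def)
qed

theorem main_gen:
  fixes sc :: "'k::field \<Rightarrow> 'a::comm_ring \<Rightarrow> 'a"
  assumes ca: "comm_algebra sc" and sfgA: "SFG sc A" and genA: "gen sc A = UNIV" and SA: "S \<subseteq> A"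
    and sfgR: "SFG sc R" and RS: "R \<subseteq> gen sc S" and xS: "x \<notin> gen sc S"
  shows "SFG sc (insert x R)"
  unfolding SFG_def
proof (intro allI impI)
  fix n and P :: "nat multiset \<Rightarrow> 'k" and y :: "nat \<Rightarrow> 'a"
  assume "nc_poly n P \<and> (\<exists>M. P M \<noteq> 0) \<and> inj_on y {..<n} \<and> y ` {..<n} \<subseteq> insert x R"
  then have ncP: "nc_poly n P" and nzP: "\<exists>M. P M \<noteq> 0" and injy: "inj_on y {..<n}"
    and yim: "y ` {..<n} \<subseteq> insert x R" by auto
  show "peval sc P y \<noteq> 0"
  proof (cases "x \<in> y ` {..<n}")
    case False
    then have "y ` {..<n} \<subseteq> R" using yim by auto
    then show ?thesis using sfgR ncP nzP injy unfolding SFG_def by blast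
  next
    case True
    then obtain j where j: "j < n" "y j = x" by auto
    have yR: "y i \<in> R" if "i < n" "i \<noteq> j" for i
    proof -
      have "y i \<noteq> x" using injy j that by (metis inj_on_def lessThan_iff)
      then show ?thesis using yim that by auto
    qed
    have H0: "\<forall>i\<in>{..<n}. \<exists>t. nc_poly (fst t) (fst (snd t)) \<and>
        snd (snd t) ` {..<fst t} \<subseteq> (if i = j then A else S) \<and> y i = peval sc (fst (snd t)) (snd (snd t))"
    proof
      fix i assume i: "i \<in> {..<n}"
      have "y i \<in> gen sc (if i = j then A else S)"
      proof (cases "i = j")
        case True then show ?thesis using genA by simp
      next
        case False
        then have "y i \<in> R" using yR i by simp
        then show ?thesis using RS False by (simp add: subset_iff)
      qed
      then obtain nq Q z where "nc_poly nq Q" "z ` {..<nq} \<subseteq> (if i = j then A else S)" "y i = peval sc Q z"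
        unfolding gen_def mem_Collect_eq by metis
      then show "\<exists>t. nc_poly (fst t) (fst (snd t)) \<and>
        snd (snd t) ` {..<fst t} \<subseteq> (if i = j then A else S) \<and> y i = peval sc (fst (snd t)) (snd (snd t))"
        by (intro exI[of _ "(nq, Q, z)"]) simp
    qed
    obtain t where t: "\<forall>i\<in>{..<n}. nc_poly (fst (t i)) (fst (snd (t i))) \<and>
        snd (snd (t i)) ` {..<fst (t i)} \<subseteq> (if i = j then A else S) \<and> y i = peval sc (fst (snd (t i))) (snd (snd (t i)))"
      using bchoice[OF H0] by blast
    define nn where "nn i = fst (t i)" for i
    define QQ where "QQ i = fst (snd (t i))" for i
    define zz where "zz i = snd (snd (t i))" for i
    have tQ: "nc_poly (nn i) (QQ i)" "zz i ` {..<nn i} \<subseteq> (if i = j then A else S)" "y i = peval sc (QQ i) (zz i)"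
      if "i < n" for i
      using t that unfolding nn_def QQ_def zz_def by auto
    define T where "T = (\<Union>i\<in>{..<n}. zz i ` {..<nn i})"
    have finT: "finite T" unfolding T_def by auto
    obtain a :: "nat \<Rightarrow> 'a" and m where aim: "a ` {..<m} = T" and ainj: "inj_on a {..<m}"
      using list_enum[OF finT] by blast
    have TA: "T \<subseteq> A"
    proof
      fix s assume "s \<in> T"
      then obtain i k where "i < n" "k < nn i" "s = zz i k" unfolding T_def by auto
      then show "s \<in> A" using tQ(2)[of i] SA by (auto split: if_splits)
    qed
    define g where "g = the_inv_into {..<m} a"
    have gT: "g s < m \<and> a (g s) = s" if "s \<in> T" for s
      using that aim ainj the_inv_into_into[OF ainj, of s] f_the_inv_into_f[OF ainj, of s]
      unfolding g_def by auto
    define QP where "QP i = Abs_poly_mapping (QQ i)" for i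
    have lQP: "Poly_Mapping.lookup (QP i) = QQ i" if "i < n" for i
      unfolding QP_def using tQ(1)[OF that] by (intro lookup_Abs) (simp add: nc_poly_def)
    have kQP: "M \<noteq> {#} \<and> set_mset M \<subseteq> {..<nn i}" if "i < n" "M \<in> Poly_Mapping.keys (QP i)" for i M
      using that tQ(1)[OF that(1)] lQP[OF that(1)] by (auto simp: nc_poly_def in_keys_iff)
    define Z where "Z i = comp (QP i) (\<lambda>k. Var (g (zz i k)))" for i
    define VV where "VV i = {k. k < m \<and> a k \<in> (if i = j then A else S)}" for i
    have Zn: "nzin (VV i) (Z i)" if "i < n" for i
      unfolding Z_def
    proof (rule comp_nzin)
      fix M assume "M \<in> Poly_Mapping.keys (QP i)" then show "M \<noteq> {#}" using kQP that by blast
    next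
      fix M k assume "M \<in> Poly_Mapping.keys (QP i)" "k \<in># M"
      then have k: "k < nn i" using kQP that by blast
      then have "zz i k \<in> T" unfolding T_def using that by blast
      moreover have "zz i k \<in> (if i = j then A else S)" using tQ(2)[OF that] k by auto
      ultimately show "nzin (VV i) (Var (g (zz i k)))"
        using gT by (simp add: nzin_Var' VV_def)
    qed
    have Zm: "nzin {..<m} (Z i)" "nzin UNIV (Z i)" if "i < n" for i
    proof -
      have "VV i \<subseteq> {..<m}" by (auto simp: VV_def)
      then show "nzin {..<m} (Z i)" using nzin_mono Zn[OF that] by blast
      show "nzin UNIV (Z i)" using nzin_mono[of "VV i" UNIV] Zn[OF that] by blast
    qed
    have yZ: "y i = Ev sc a (Z i)" if "i < n" for i
    proof -
      have "y i = peval sc (Poly_Mapping.lookup (QP i)) (zz i)" using tQ(3)[OF that] lQP[OF that] by simp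
      also have "\<dots> = Ev sc a (Z i)"
        unfolding Z_def
      proof (rule CL[OF ca])
        fix M assume "M \<in> Poly_Mapping.keys (QP i)"
        then show "M \<noteq> {#} \<and> set_mset M \<subseteq> {..<nn i}" using kQP that by blast
      next
        fix k assume "k \<in> {..<nn i}"
        then have "zz i k \<in> T" unfolding T_def using that by blast
        then show "nzin UNIV (Var (g (zz i k))) \<and> zz i k = Ev sc a (Var (g (zz i k)))"
          using gT by (simp add: nzin_Var' Ev_Var[OF ca])
      qed
      finally show ?thesis .
    qed
    define P' where "P' = Abs_poly_mapping P"
    have lP': "Poly_Mapping.lookup P' = P" unfolding P'_def using ncP by (intro lookup_Abs) (simp add: nc_poly_def)
    have kP': "M \<noteq> {#} \<and> set_mset M \<subseteq> {..<n}" if "M \<in> Poly_Mapping.keys P'" for M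
      using that ncP lP' by (auto simp: nc_poly_def in_keys_iff)
    have P'0: "P' \<noteq> 0" using nzP lP' by auto
    have pv: "peval sc P y = Ev sc a (comp P' Z)"
    proof -
      have "peval sc (Poly_Mapping.lookup P') y = Ev sc a (comp P' Z)"
      proof (rule CL[OF ca])
        fix M assume "M \<in> Poly_Mapping.keys P'" then show "M \<noteq> {#} \<and> set_mset M \<subseteq> {..<n}" using kP' by blast
      next
        fix i assume "i \<in> {..<n}" then show "nzin UNIV (Z i) \<and> y i = Ev sc a (Z i)" using Zm yZ by simp
      qed
      then show ?thesis using lP' by simp
    qed
    show ?thesis
    proof
      assume pz: "peval sc P y = 0"
      have nzc: "nzin {..<m} (comp P' Z)"
      proof (rule comp_nzin)
        fix M assume "M \<in> Poly_Mapping.keys P'" then show "M \<noteq> {#}" using kP' by blast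
      next
        fix M k assume "M \<in> Poly_Mapping.keys P'" "k \<in># M"
        then have "k < n" using kP' by blast
        then show "nzin {..<m} (Z k)" using Zm by blast
      qed
      have cz: "comp P' Z = 0"
      proof (rule ccontr)
        assume "comp P' Z \<noteq> 0"
        have sfgA': "\<And>n P x. nc_poly n P \<Longrightarrow> (\<exists>M. P M \<noteq> 0) \<Longrightarrow> inj_on x {..<n} \<Longrightarrow> x ` {..<n} \<subseteq> A \<Longrightarrow> peval sc P x \<noteq> 0"
          using sfgA unfolding SFG_def by blast
        have "a ` {..<m} \<subseteq> A" using aim TA by simp
        then have "peval sc (Poly_Mapping.lookup (comp P' Z)) a \<noteq> 0"
          using sfgA'[OF nc_poly_lookup[OF nzc] nz_exists[OF \<open>comp P' Z \<noteq> 0\<close>] ainj] by blast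
        then show False using pv pz by (simp add: Ev_def)
      qed
      define IS where "IS = {k. a k \<in> S}"
      define V0 where "V0 = {..<n} - {j}"
      have ZIS: "\<forall>M\<in>Poly_Mapping.keys (Z i). set_mset M \<subseteq> IS" if "i \<in> V0" for i
        using Zn[of i] that unfolding V0_def VV_def IS_def nzin_def by auto
      have "\<exists>M0 k0. M0 \<in> Poly_Mapping.keys (Z j) \<and> k0 \<in># M0 \<and> k0 \<notin> IS"
      proof (rule ccontr)
        assume "\<not> ?thesis"
        then have allIS: "\<forall>M\<in>Poly_Mapping.keys (Z j). set_mset M \<subseteq> IS" by blast
        have xE: "x = peval sc (Poly_Mapping.lookup (Z j)) a" using yZ[OF j(1)] j(2) by (simp add: Ev_def)
        have "x \<in> gen sc S"
        proof (cases "S = {}")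
          case True
          then have "Poly_Mapping.keys (Z j) = {}"
            using allIS Zm(2)[OF j(1)] by (auto simp: IS_def nzin_def)
          then have "x = 0" using xE by (simp add: peval_def keys_lookup_set)
          moreover have "peval sc (\<lambda>_. 0) a \<in> gen sc S"
            unfolding gen_def by (rule CollectI, intro exI[of _ 0] exI[of _ "\<lambda>_. 0"] exI[of _ a]) (simp add: nc_poly_def)
          ultimately show ?thesis by (simp add: peval_def)
        next
          case False
          then obtain s0 where s0: "s0 \<in> S" by blast
          define a' where "a' k = (if a k \<in> S then a k else s0)" for k
          have "x = peval sc (Poly_Mapping.lookup (Z j)) a'"
            unfolding xE peval_def
          proof (intro sum.cong refl arg_cong[where f="sc _"] monom_cong)
            fix M k assume "M \<in> {M. Poly_Mapping.lookup (Z j) M \<noteq> 0}" "k \<in># M"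
            then have "k \<in> IS" using allIS by (auto simp: in_keys_iff)
            then show "a k = a' k" by (simp add: a'_def IS_def)
          qed
          moreover have "nc_poly m (Poly_Mapping.lookup (Z j))" using nc_poly_lookup Zm(1)[OF j(1)] by blast
          moreover have "a' ` {..<m} \<subseteq> S" using s0 by (auto simp: a'_def)
          ultimately show ?thesis unfolding gen_def by blast
        qed
        then show False using xS by blast
      qed
      then obtain M0 k0 where M0: "M0 \<in> Poly_Mapping.keys (Z j)" "k0 \<in># M0" "k0 \<notin> IS" by blast
      have indep: "comp G Z \<noteq> 0" if G0: "G \<noteq> 0" and GV: "\<forall>M\<in>Poly_Mapping.keys G. set_mset M \<subseteq> V0" for G
      proof (cases "Poly_Mapping.lookup G {#} = 0")
        case False
        have "Poly_Mapping.lookup (comp G Z) {#} = Poly_Mapping.lookup G {#}"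
        proof (rule comp_const)
          fix M k assume "M \<in> Poly_Mapping.keys G" "k \<in># M"
          then have "k < n" using GV by (auto simp: V0_def)
          then show "nzin UNIV (Z k)" using Zm by blast
        qed
        then show ?thesis using False by auto
      next
        case True
        have nzG: "nzin V0 G" using True GV by (auto simp: nzin_def in_keys_iff)
        have "peval sc (Poly_Mapping.lookup G) y \<noteq> 0"
          by (rule SFG_V[OF ca sfgR _ _ _ G0 nzG])
             (use injy yR in \<open>auto simp: V0_def intro: inj_on_subset\<close>)
        moreover have "peval sc (Poly_Mapping.lookup G) y = Ev sc a (comp G Z)"
        proof (rule CL[OF ca])
          fix M assume "M \<in> Poly_Mapping.keys G" then show "M \<noteq> {#} \<and> set_mset M \<subseteq> V0" using nzG by (auto simp: nzin_def)
        next
          fix i assume "i \<in> V0" then show "nzin UNIV (Z i) \<and> y i = Ev sc a (Z i)" using Zm yZ by (auto simp: V0_def)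
        qed
        ultimately show ?thesis using Ev_zero[OF ca, of a] by auto
      qed
      have PV: "\<forall>M\<in>Poly_Mapping.keys P'. set_mset M \<subseteq> insert j V0"
        using kP' by (auto simp: V0_def)
      have "comp P' Z \<noteq> 0"
        by (rule core[OF indep ZIS M0 PV P'0])
      then show False using cz by simp
    qed
  qed
qed

theorem lemma4p2:
  shows "(\<forall>(sc :: real \<Rightarrow> 'a::comm_ring \<Rightarrow> 'a) A S R x.
            comm_algebra sc \<and> SFG sc A \<and> gen sc A = UNIV \<and> S \<subseteq> A \<and>
            SFG sc R \<and> R \<subseteq> gen sc S \<and> x \<notin> gen sc S
            \<longrightarrow> SFG sc (insert x R))
       \<and> (\<forall>(sc :: complex \<Rightarrow> 'b::comm_ring \<Rightarrow> 'b) A S R x.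
            comm_algebra sc \<and> SFG sc A \<and> gen sc A = UNIV \<and> S \<subseteq> A \<and>
            SFG sc R \<and> R \<subseteq> gen sc S \<and> x \<notin> gen sc S
            \<longrightarrow> SFG sc (insert x R))"
  by (intro conjI allI impI; elim conjE; rule main_gen; assumption)

end
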